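(* Let $(i^*_k,j^*_k)$ and $\mu_k$, $k=1,\dots,n$, be a sequence of $k$-th order bottleneck edges and robustness margins, and let $\Pi^*$ be a sequential bottleneck optimising assignment for this sequence. Assume $\mu_k>0$ for all $k\in\{1,\dots,n\}$. Then $\Pi^*\in\mathcal P_{\mathcal A,\mathcal T}(\mathcal A\times\mathcal T)$, $w_{i^*_1,j^*_1}\ge w_{i^*_2,j^*_2}\ge\dots\ge w_{i^*_n,j^*_n}$, and $\Pi^*$ is the unique lexicographic optimiser in the following sense: for every $\Pi'\in\mathcal P_{\mathcal A,\mathcal T}(\mathcal A\times\mathcal T)$ with $\Pi'\ne\Pi^*$, letting $(w'_1,\dots,w'_n)$ be the weights $w_{i,j}$ of the $n$ pairs $(i,j)$ with $\pi'_{i,j}=1$ listed in non-increasing order, either $w_{i^*_1,j^*_1}<w'_1$, or there is $l\in\{2,\dots,n\}$ with $w_{i^*_k,j^*_k}=w'_k$ for all $k<l$ and $w_{i^*_l,j^*_l}<w'_l$. In particular, the sequence $(w_{i^*_1,j^*_1},\dots,w_{i^*_n,j^*_n})$ and the assignment $\Pi^*$ do not depend on the choices of the $k$-th order bottleneck edges.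
   Context: Let $\mathcal A$ be a finite set of agents with $|\mathcal A|=m>1$ and $\mathcal T$ a finite set of tasks with $m\ge|\mathcal T|=n\ge 1$. Let $\mathcal W=\{w_{i,j}\ge 0:(i,j)\in\mathcal A\times\mathcal T\}$ be given assignment weights. An assignment is a family $\Pi=\{\pi_{i,j}\in\{0,1\}:(i,j)\in\mathcal A\times\mathcal T\}$. For $\bar{\mathcal A}\subseteq\mathcal A$, $\bar{\mathcal T}\subseteq\mathcal T$ and $\hat{\mathcal E}\subseteq\bar{\mathcal A}\times\bar{\mathcal T}$, $\mathcal P_{\bar{\mathcal A},\bar{\mathcal T}}(\hat{\mathcal E})$ is the set of assignments $\Pi$ with $\sum_{i:(i,j)\in\hat{\mathcal E}}\pi_{i,j}=1$ for every $j\in\bar{\mathcal T}$ and $\sum_{j:(i,j)\in\hat{\mathcal E}}\pi_{i,j}\le 1$ for every $i\in\bar{\mathcal A}$. Define $b(\Pi,\hat{\mathcal E},\mathcal W)=\max_{(i,j)\in\hat{\mathcal E}}\pi_{i,j}w_{i,j}$; $B_{\bar{\mathcal A},\bar{\mathcal T}}(\hat{\mathcal E},\mathcal W)=\min_{\Pi\in\mathcal P_{\bar{\mathcal A},\bar{\mathcal T}}(\hat{\mathcal E})}b(\Pi,\hat{\mathcal E},\mathcal W)$ (with $\min\emptyset=+\infty$); $\mathcal B_{\bar{\mathcal A},\bar{\mathcal T}}(\hat{\mathcal E},\mathcal W)$ the corresponding set of minimisers (bottleneck minimising assignments); and $E_{\bar{\mathcal A},\bar{\mathcal T}}(\hat{\mathcal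 E},\mathcal W)=\{(i,j)\in\hat{\mathcal E}: w_{i,j}=B_{\bar{\mathcal A},\bar{\mathcal T}}(\hat{\mathcal E},\mathcal W)\}$. For $\bar{\mathcal E}=\bar{\mathcal A}\times\bar{\mathcal T}$ with $|\bar{\mathcal E}|>1$: $e_{\bar{\mathcal A},\bar{\mathcal T}}(\mathcal W)=\arg\max_{(i,j)\in E_{\bar{\mathcal A},\bar{\mathcal T}}(\bar{\mathcal E},\mathcal W)}B_{\bar{\mathcal A},\bar{\mathcal T}}(\bar{\mathcal E}\setminus\{(i,j)\},\mathcal W)$ (maximum-margin bottleneck edges) and $r_{\bar{\mathcal A},\bar{\mathcal T}}(\mathcal W)=\max_{(i,j)\in E_{\bar{\mathcal A},\bar{\mathcal T}}(\bar{\mathcal E},\mathcal W)}\big(B_{\bar{\mathcal A},\bar{\mathcal T}}(\bar{\mathcal E}\setminus\{(i,j)\},\mathcal W)-w_{i,j}\big)$ (robustness margin); if $|\bar{\mathcal E}|=1$, $e_{\bar{\mathcal A},\bar{\mathcal T}}(\mathcal W)=\bar{\mathcal E}$ and $r_{\bar{\mathcal A},\bar{\mathcal T}}(\mathcal W)=\infty$. Sequential bottleneck assignment: set $\bar{\mathcal A}_1=\mathcal A$, $\bar{\mathcal T}_1=\mathcal T$, and for $k=1,\dots,n$ let $\bar{\mathcal E}_k=\bar{\mathcal A}_k\times\bar{\mathcal T}_k$, choose a $k$-th order bottleneck edge $(i^*_k,j^*_k)\in e_{\bar{\mathcal A}_k,\bar{\mathcal T}_k}(\mathcal W)$ (any choice),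 let $\mu_k=r_{\bar{\mathcal A}_k,\bar{\mathcal T}_k}(\mathcal W)$ be the $k$-th order robustness margin, and set $\bar{\mathcal A}_{k+1}=\bar{\mathcal A}_k\setminus\{i^*_k\}$, $\bar{\mathcal T}_{k+1}=\bar{\mathcal T}_k\setminus\{j^*_k\}$. Given these choices, an assignment $\Pi^*$ is sequential bottleneck optimising if $\Pi^*\in\mathcal B_{\bar{\mathcal A}_k,\bar{\mathcal T}_k}(\bar{\mathcal E}_k,\mathcal W)$ for every $k\in\{1,\dots,n\}$. *)

theory Defs
  imports Complex_Main "HOL-Library.Multiset" "HOL-Library.Extended_Real"
begin

text \<open>Agents are the elements of a finite type 'a (the set A = UNIV), tasks the elements
of a finite type 't (the set T = UNIV). Extended reals are used so that min over the empty set is +infinity.\<close>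

definition is_assignment :: "('a \<Rightarrow> 't \<Rightarrow> nat) \<Rightarrow> bool" where
  "is_assignment Pi \<longleftrightarrow> (\<forall>i j. Pi i j \<in> {0, 1})"

definition feas :: "'a::finite set \<Rightarrow> 't::finite set \<Rightarrow> ('a \<times> 't) set
    \<Rightarrow> ('a \<Rightarrow> 't \<Rightarrow> nat) set" where
  "feas Ab Tb E = {Pi. is_assignment Pi
      \<and> (\<forall>j\<in>Tb. (\<Sum>i\<in>{i. (i, j) \<in> E}. Pi i j) = 1)
      \<and> (\<forall>i\<in>Ab. (\<Sum>j\<in>{j. (i, j) \<in> E}. Pi i j) \<le> 1)}"

definition bval :: "('a \<Rightarrow> 't \<Rightarrow> nat) \<Rightarrow> ('a \<times> 't) set \<Rightarrow> ('a \<Rightarrow> 't \<Rightarrow> real) \<Rightarrow> ereal" where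
  "bval Pi E w = (SUP e\<in>E. ereal (real (Pi (fst e) (snd e)) * w (fst e) (snd e)))"

definition Bmin :: "'a::finite set \<Rightarrow> 't::finite set \<Rightarrow> ('a \<times> 't) set
    \<Rightarrow> ('a \<Rightarrow> 't \<Rightarrow> real) \<Rightarrow> ereal" where
  "Bmin Ab Tb E w = (INF Pi\<in>feas Ab Tb E. bval Pi E w)"

definition Bset :: "'a::finite set \<Rightarrow> 't::finite set \<Rightarrow> ('a \<times> 't) set
    \<Rightarrow> ('a \<Rightarrow> 't \<Rightarrow> real) \<Rightarrow> ('a \<Rightarrow> 't \<Rightarrow> nat) set" where
  "Bset Ab Tb E w = {Pi\<in>feas Ab Tb E. bval Pi E w = Bmin Ab Tb E w}"

definition Eset :: "'a::finite set \<Rightarrow> 't::finite set \<Rightarrow> ('a \<times> 't) set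
    \<Rightarrow> ('a \<Rightarrow> 't \<Rightarrow> real) \<Rightarrow> ('a \<times> 't) set" where
  "Eset Ab Tb E w = {e\<in>E. ereal (w (fst e) (snd e)) = Bmin Ab Tb E w}"

definition medges :: "'a::finite set \<Rightarrow> 't::finite set \<Rightarrow> ('a \<Rightarrow> 't \<Rightarrow> real) \<Rightarrow> ('a \<times> 't) set" where
  "medges Ab Tb w =
    (if card (Ab \<times> Tb) = 1 then Ab \<times> Tb
     else {e\<in>Eset Ab Tb (Ab \<times> Tb) w. \<forall>e'\<in>Eset Ab Tb (Ab \<times> Tb) w.
             Bmin Ab Tb (Ab \<times> Tb - {e'}) w \<le> Bmin Ab Tb (Ab \<times> Tb - {e}) w})"

definition rmargin :: "'a::finite set \<Rightarrow> 't::finite set \<Rightarrow> ('a \<Rightarrow> 't \<Rightarrow> real) \<Rightarrow> ereal" where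
  "rmargin Ab Tb w =
    (if card (Ab \<times> Tb) = 1 then \<infinity>
     else (SUP e\<in>Eset Ab Tb (Ab \<times> Tb) w.
             Bmin Ab Tb (Ab \<times> Tb - {e}) w - ereal (w (fst e) (snd e))))"

definition Abar :: "(nat \<Rightarrow> 'a) \<Rightarrow> nat \<Rightarrow> 'a set" where
  "Abar I k = UNIV - I ` {1..<k}"

definition Tbar :: "(nat \<Rightarrow> 't) \<Rightarrow> nat \<Rightarrow> 't set" where
  "Tbar J k = UNIV - J ` {1..<k}"

definition bottleneck_seq :: "('a::finite \<Rightarrow> 't::finite \<Rightarrow> real) \<Rightarrow> (nat \<Rightarrow> 'a) \<Rightarrow> (nat \<Rightarrow> 't) \<Rightarrow> bool" where
  "bottleneck_seq w I J \<longleftrightarrow>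
     (\<forall>k\<in>{1..card (UNIV :: 't set)}. (I k, J k) \<in> medges (Abar I k) (Tbar J k) w)"

definition mu :: "('a::finite \<Rightarrow> 't::finite \<Rightarrow> real) \<Rightarrow> (nat \<Rightarrow> 'a) \<Rightarrow> (nat \<Rightarrow> 't) \<Rightarrow> nat \<Rightarrow> ereal" where
  "mu w I J k = rmargin (Abar I k) (Tbar J k) w"

definition seq_opt :: "('a::finite \<Rightarrow> 't::finite \<Rightarrow> real) \<Rightarrow> (nat \<Rightarrow> 'a) \<Rightarrow> (nat \<Rightarrow> 't)
    \<Rightarrow> ('a \<Rightarrow> 't \<Rightarrow> nat) \<Rightarrow> bool" where
  "seq_opt w I J Pi \<longleftrightarrow>
     (\<forall>k\<in>{1..card (UNIV :: 't set)}. Pi \<in> Bset (Abar I k) (Tbar J k) (Abar I k \<times> Tbar J k) w)"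

definition sorted_weights :: "('a::finite \<Rightarrow> 't::finite \<Rightarrow> real) \<Rightarrow> ('a \<Rightarrow> 't \<Rightarrow> nat) \<Rightarrow> real list" where
  "sorted_weights w Pi =
     rev (sorted_list_of_multiset
            (image_mset (\<lambda>e. w (fst e) (snd e)) (mset_set {e. Pi (fst e) (snd e) = 1})))"

end

theory Submission
  imports Defs
begin

lemma count_nth:
  fixes ws :: "real list"
  assumes srt: "sorted (rev ws)" and up: "\<And>x y. Q x \<Longrightarrow> x \<le> y \<Longrightarrow> Q y"
    and i1: "1 \<le> i" and ile: "i \<le> length (filter Q ws)"
  shows "Q (ws ! (i - 1))"
proof (rule ccontr)
  assume nq: "\<not> Q (ws ! (i - 1))"
  have ilen: "i \<le> length ws" using ile length_filter_le[of Q ws] by linarith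
  have "\<forall>x\<in>set (drop (i - 1) ws). \<not> Q x"
  proof
    fix x assume "x \<in> set (drop (i - 1) ws)"
    then obtain p where p: "p < length (drop (i - 1) ws)" "x = drop (i - 1) ws ! p"
      by (auto simp: in_set_conv_nth)
    then have x: "x = ws ! (i - 1 + p)" and pl: "i - 1 + p < length ws" by auto
    have "x \<le> ws ! (i - 1)" using sorted_rev_nth_mono[OF srt _ pl] x by simp
    then show "\<not> Q x" using nq up by blast
  qed
  then have "filter Q (drop (i - 1) ws) = []" by (simp add: filter_empty_conv)
  then have "filter Q ws = filter Q (take (i - 1) ws)"
    by (metis append_Nil2 append_take_drop_id filter_append)
  then have "length (filter Q ws) \<le> i - 1"
    by (metis length_filter_le length_take min.bounded_iff order_trans nle_le)
  then show False using ile i1 by linarith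
qed

lemma count_nth_mset:
  fixes ws :: "real list"
  assumes srt: "sorted (rev ws)" and up: "\<And>x y. Q x \<Longrightarrow> x \<le> y \<Longrightarrow> Q y"
    and sub: "mset ys \<subseteq># mset ws" and allQ: "\<forall>x\<in>set ys. Q x"
    and i1: "1 \<le> i" and ile: "i \<le> length ys"
  shows "Q (ws ! (i - 1))"
proof -
  have "filter_mset Q (mset ys) \<subseteq># filter_mset Q (mset ws)"
    by (rule multiset_filter_mono[OF sub])
  then have "size (mset (filter Q ys)) \<le> size (mset (filter Q ws))"
    by (metis mset_filter size_mset_mono)
  moreover have "filter Q ys = ys" using allQ by simp
  ultimately have "length ys \<le> length (filter Q ws)" by (metis size_mset)
  then have "i \<le> length (filter Q ws)" using ile by linarith
  then show ?thesis using count_nth[OF srt _ i1, of Q] up by blast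
qed

lemma mset_take_sub: "mset (take i xs) \<subseteq># mset xs"
  by (metis append_take_drop_id mset_append mset_subset_eq_add_left)

lemma lexL:
  fixes ws :: "real list" and a :: "nat \<Rightarrow> real"
  assumes srt: "sorted (rev ws)"
    and k1: "1 \<le> k"
    and mono: "\<And>i j. 1 \<le> i \<Longrightarrow> i \<le> j \<Longrightarrow> j \<le> k \<Longrightarrow> a j \<le> a i"
    and sub: "mset (map a [1..<k] @ [d]) \<subseteq># mset ws"
    and dgt: "a k < d"
  shows "\<exists>l\<in>{1..k}. (\<forall>j\<in>{1..<l}. a j = ws ! (j - 1)) \<and> a l < ws ! (l - 1)"
proof -
  define xs where "xs = map a [1..<k] @ [d]"
  have lxs: "length xs = k" using k1 by (simp add: xs_def)
  have dom: "a i \<le> ws ! (i - 1)" if i: "1 \<le> i" "i \<le> k" for i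
  proof -
    have s1: "mset (take i xs) \<subseteq># mset ws"
      using mset_take_sub[of i xs] sub unfolding xs_def[symmetric]
      by (meson subset_mset.order_trans)
    have allQ: "\<forall>x\<in>set (take i xs). a i \<le> x"
    proof (cases "i < k")
      case True
      then have "take i xs = map a [1..<Suc i]" unfolding xs_def using i
        by (simp add: take_map take_upt)
      then show ?thesis using mono i True by auto
    next
      case False
      then have "i = k" using i by simp
      then have "take i xs = xs" using lxs by simp
      then show ?thesis unfolding xs_def using mono \<open>i = k\<close> dgt k1 by auto
    qed
    show ?thesis
      by (rule count_nth_mset[OF srt _ s1 allQ i(1)]) (use lxs i in auto)
  qed
  define i0 where "i0 = (LEAST i. 1 \<le> i \<and> i \<le> k \<and> a i = a k)"
  have i0: "1 \<le> i0 \<and> i0 \<le> k \<and> a i0 = a k"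
    unfolding i0_def by (rule LeastI[of _ k]) (use k1 in auto)
  have lt: "a k < a j" if "1 \<le> j" "j < i0" for j
  proof -
    have "a j \<noteq> a k" using not_less_Least[of j "\<lambda>i. 1 \<le> i \<and> i \<le> k \<and> a i = a k"] that i0
      unfolding i0_def by auto
    moreover have "a k \<le> a j" using mono[of j k] that i0 by auto
    ultimately show ?thesis by simp
  qed
  have strict: "a i0 < ws ! (i0 - 1)"
  proof -
    define ys where "ys = take (i0 - 1) (map a [1..<k]) @ [d]"
    have "mset ys \<subseteq># mset xs" unfolding ys_def xs_def
      using mset_take_sub[of "i0 - 1" "map a [1..<k]"] by simp
    then have s1: "mset ys \<subseteq># mset ws" using sub unfolding xs_def[symmetric]
      by (meson subset_mset.order_trans)
    have ty: "take (i0 - 1) (map a [1..<k]) = map a [1..<i0]" using i0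
      by (simp add: take_map take_upt)
    have allQ: "\<forall>x\<in>set ys. a k < x" unfolding ys_def ty using lt dgt by auto
    have "a k < ws ! (i0 - 1)"
      by (rule count_nth_mset[OF srt _ s1 allQ, of i0]) (use i0 ty ys_def in auto)
    then show ?thesis using i0 by simp
  qed
  define l where "l = (LEAST l. 1 \<le> l \<and> l \<le> k \<and> a l < ws ! (l - 1))"
  have l: "1 \<le> l \<and> l \<le> k \<and> a l < ws ! (l - 1)"
    unfolding l_def by (rule LeastI[of _ i0]) (use i0 strict in auto)
  have "\<forall>j\<in>{1..<l}. a j = ws ! (j - 1)"
  proof
    fix j assume j: "j \<in> {1..<l}"
    have "\<not> (1 \<le> j \<and> j \<le> k \<and> a j < ws ! (j - 1))"
      using not_less_Least[of j "\<lambda>l. 1 \<le> l \<and> l \<le> k \<and> a l < ws ! (l - 1)"] j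
      unfolding l_def by auto
    then show "a j = ws ! (j - 1)" using dom[of j] j l by force
  qed
  then show ?thesis using l by auto
qed


locale seqs =
  fixes w :: "'a::finite \<Rightarrow> 't::finite \<Rightarrow> real" and I :: "nat \<Rightarrow> 'a" and J :: "nat \<Rightarrow> 't"
    and P0 :: "'a \<Rightarrow> 't \<Rightarrow> nat"
  assumes w_nonneg: "\<And>i j. w i j \<ge> 0"
    and seq: "bottleneck_seq w I J"
    and opt: "seq_opt w I J P0"
    and mu_pos: "\<forall>k\<in>{1..card (UNIV :: 't set)}. mu w I J k > 0"
begin

lemma IJ_mem:
  assumes "k \<in> {1..card (UNIV :: 't set)}"
  shows "I k \<in> Abar I k \<and> J k \<in> Tbar J k"
proof -
  have "(I k, J k) \<in> medges (Abar I k) (Tbar J k) w" using seq assms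
    unfolding bottleneck_seq_def by blast
  then show ?thesis unfolding medges_def Eset_def by (auto split: if_splits)
qed

lemma J_ne:
  assumes "1 \<le> j" "j < k" "k \<le> card (UNIV :: 't set)"
  shows "J j \<noteq> J k" "I j \<noteq> I k"
proof -
  have "j \<in> {1..<k}" using assms by auto
  then have "J j \<in> J ` {1..<k}" "I j \<in> I ` {1..<k}" by (rule imageI)+
  moreover have "k \<in> {1..card (UNIV :: 't set)}" using assms by auto
  then have "J k \<notin> J ` {1..<k}" "I k \<notin> I ` {1..<k}" using IJ_mem[of k] unfolding Abar_def Tbar_def by auto
  ultimately show "J j \<noteq> J k" "I j \<noteq> I k" by metis+
qed

lemma J_inj: "inj_on J {1..card (UNIV :: 't set)}"
  unfolding inj_on_def by (metis J_ne(1) atLeastAtMost_iff linorder_neqE_nat)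

lemma I_inj: "inj_on I {1..card (UNIV :: 't set)}"
  unfolding inj_on_def by (metis J_ne(2) atLeastAtMost_iff linorder_neqE_nat)

lemma J_surj: "\<exists>k\<in>{1..card (UNIV :: 't set)}. J k = t"
proof -
  have "card (J ` {1..card (UNIV :: 't set)}) = card (UNIV :: 't set)"
    using card_image[OF J_inj] by simp
  then have "J ` {1..card (UNIV :: 't set)} = UNIV"
    by (metis card_subset_eq finite_UNIV subset_UNIV)
  then show ?thesis by (metis UNIV_I imageE)
qed

lemma feas_full:
  assumes "P \<in> feas UNIV UNIV UNIV"
  shows "is_assignment P" "\<And>j. (\<Sum>i\<in>UNIV. P i j) = 1" "\<And>i. (\<Sum>j\<in>UNIV. P i j) \<le> 1"
  using assms unfolding feas_def by auto

lemma two_le_sum: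
  fixes f :: "'b::finite \<Rightarrow> nat"
  assumes "x \<noteq> y"
  shows "f x + f y \<le> sum f UNIV"
proof -
  have "sum f {x, y} \<le> sum f UNIV" by (rule sum_mono2) auto
  then show ?thesis using assms by simp
qed

lemma row_zero:
  assumes "P \<in> feas UNIV UNIV UNIV" "P i j0 = 1" "j \<noteq> j0"
  shows "P i j = 0"
  using feas_full(3)[OF assms(1), of i] two_le_sum[of j0 j "P i"] assms(2,3) by simp

lemma col_unique:
  assumes "P \<in> feas UNIV UNIV UNIV" "P i1 j = 1" "P i2 j = 1"
  shows "i1 = i2"
  using feas_full(2)[OF assms(1), of j] two_le_sum[of i1 i2 "\<lambda>i. P i j"] assms(2,3) by force

lemma restrict:
  assumes P: "P \<in> feas UNIV UNIV UNIV" and k: "k \<in> {1..card (UNIV :: 't set)}"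
    and used: "\<forall>j\<in>{1..<k}. P (I j) (J j) = 1" and nu: "P (I k) (J k) = 0"
  shows "P \<in> feas (Abar I k) (Tbar J k) (Abar I k \<times> Tbar J k - {(I k, J k)})"
proof -
  have col: "(\<Sum>i\<in>{i. (i, j) \<in> Abar I k \<times> Tbar J k - {(I k, J k)}}. P i j) = 1"
    if j: "j \<in> Tbar J k" for j
  proof -
    have "(\<Sum>i\<in>{i. (i, j) \<in> Abar I k \<times> Tbar J k - {(I k, J k)}}. P i j) = (\<Sum>i\<in>UNIV. P i j)"
    proof (rule sum.mono_neutral_left)
      show "\<forall>i\<in>UNIV - {i. (i, j) \<in> Abar I k \<times> Tbar J k - {(I k, J k)}}. P i j = 0"
      proof
        fix i assume "i \<in> UNIV - {i. (i, j) \<in> Abar I k \<times> Tbar J k - {(I k, J k)}}"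
        then have "i \<notin> Abar I k \<or> (i = I k \<and> j = J k)" using j by auto
        then show "P i j = 0"
        proof
          assume "i \<notin> Abar I k"
          then obtain j' where j': "j' \<in> {1..<k}" "i = I j'" unfolding Abar_def by auto
          then have "J j' \<noteq> j" using j unfolding Tbar_def by auto
          then show ?thesis using row_zero[OF P, of i "J j'" j] used j' by auto
        qed (use nu in auto)
      qed
    qed auto
    then show ?thesis using feas_full(2)[OF P] by simp
  qed
  have row: "(\<Sum>j\<in>{j. (i, j) \<in> Abar I k \<times> Tbar J k - {(I k, J k)}}. P i j) \<le> 1" for i
  proof -
    have "(\<Sum>j\<in>{j. (i, j) \<in> Abar I k \<times> Tbar J k - {(I k, J k)}}. P i j) \<le> (\<Sum>j\<in>UNIV. P i j)"
      by (rule sum_mono2) auto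
    then show ?thesis using feas_full(3)[OF P, of i] by linarith
  qed
  show ?thesis by (simp only: feas_def mem_Collect_eq) (use col row feas_full(1)[OF P] in blast)
qed

lemma ereal_pos_diff:
  assumes "0 < x - ereal c"
  shows "ereal c < x"
  using assms by (cases x) auto

lemma F3:
  assumes P: "P \<in> feas UNIV UNIV UNIV" and k: "k \<in> {1..card (UNIV :: 't set)}"
    and used: "\<forall>j\<in>{1..<k}. P (I j) (J j) = 1" and nu: "P (I k) (J k) = 0"
  shows "\<exists>f\<in>Abar I k \<times> Tbar J k - {(I k, J k)}. P (fst f) (snd f) = 1 \<and> w (I k) (J k) < w (fst f) (snd f)"
proof -
  define A where "A = Abar I k"
  define T where "T = Tbar J k"
  define e where "e = (I k, J k)"
  have fe: "P \<in> feas A T (A \<times> T - {e})" using restrict[OF P k used nu] unfolding A_def T_def e_def .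
  have eE: "e \<in> A \<times> T" using IJ_mem[OF k] unfolding A_def T_def e_def by auto
  show ?thesis
  proof (cases "card (A \<times> T) = 1")
    case True
    then have "A \<times> T = {e}" using eE by (metis card_1_singletonE singletonD)
    then have "A \<times> T - {e} = {}" by simp
    moreover have "J k \<in> T" using IJ_mem[OF k] unfolding T_def by auto
    moreover have "(\<Sum>i\<in>{i. (i, J k) \<in> A \<times> T - {e}}. P i (J k)) = 1"
      using fe \<open>J k \<in> T\<close> unfolding feas_def by blast
    moreover have "{i. (i, J k) \<in> A \<times> T - {e}} = {}" unfolding \<open>A \<times> T - {e} = {}\<close> by simp
    ultimately have False by (simp only: sum.empty)
    then show ?thesis ..
  next
    case False
    have em: "e \<in> medges A T w" using seq k unfolding bottleneck_seq_def A_def T_def e_def by blast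
    then have eEs: "e \<in> Eset A T (A \<times> T) w"
      and emax: "\<forall>e'\<in>Eset A T (A \<times> T) w. Bmin A T (A \<times> T - {e'}) w \<le> Bmin A T (A \<times> T - {e}) w"
      using False unfolding medges_def by auto
    have "0 < rmargin A T w" using mu_pos k unfolding mu_def A_def T_def by blast
    then have "0 < (SUP e'\<in>Eset A T (A \<times> T) w. Bmin A T (A \<times> T - {e'}) w - ereal (w (fst e') (snd e')))"
      using False unfolding rmargin_def by (simp only: if_False)
    also have "\<dots> \<le> Bmin A T (A \<times> T - {e}) w - ereal (w (fst e) (snd e))"
    proof (rule SUP_least)
      fix e' assume e': "e' \<in> Eset A T (A \<times> T) w"
      then have "ereal (w (fst e') (snd e')) = ereal (w (fst e) (snd e))" using eEs unfolding Eset_def by auto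
      then have "w (fst e') (snd e') = w (fst e) (snd e)" by simp
      then show "Bmin A T (A \<times> T - {e'}) w - ereal (w (fst e') (snd e')) \<le> Bmin A T (A \<times> T - {e}) w - ereal (w (fst e) (snd e))"
        using emax e' by (simp add: ereal_minus_mono)
    qed
    finally have "ereal (w (fst e) (snd e)) < Bmin A T (A \<times> T - {e}) w" by (rule ereal_pos_diff)
    also have "\<dots> \<le> bval P (A \<times> T - {e}) w" unfolding Bmin_def using fe by (rule INF_lower)
    finally obtain f where f: "f \<in> A \<times> T - {e}"
      and lt: "ereal (w (fst e) (snd e)) < ereal (real (P (fst f) (snd f)) * w (fst f) (snd f))"
      unfolding bval_def by (auto simp: less_SUP_iff)
    have "P (fst f) (snd f) \<in> {0, 1}" using feas_full(1)[OF P] unfolding is_assignment_def by auto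
    moreover have "P (fst f) (snd f) \<noteq> 0"
    proof
      assume "P (fst f) (snd f) = 0"
      then show False using lt w_nonneg[of "I k" "J k"] unfolding e_def by simp
    qed
    ultimately have "P (fst f) (snd f) = 1" by auto
    then show ?thesis using f lt unfolding A_def T_def e_def by auto
  qed
qed

lemma n_pos: "1 \<le> card (UNIV :: 't set)"
  by (simp add: Suc_le_eq card_gt_0_iff)

lemma P0_bset: "k \<in> {1..card (UNIV :: 't set)} \<Longrightarrow> P0 \<in> Bset (Abar I k) (Tbar J k) (Abar I k \<times> Tbar J k) w"
  using opt unfolding seq_opt_def by blast

lemma P0_feas: "P0 \<in> feas UNIV UNIV UNIV"
proof -
  have "P0 \<in> Bset (Abar I 1) (Tbar J 1) (Abar I 1 \<times> Tbar J 1) w" using P0_bset n_pos by auto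
  moreover have "Abar I 1 = UNIV" "Tbar J 1 = UNIV" by (auto simp: Abar_def Tbar_def)
  ultimately show ?thesis unfolding Bset_def by simp
qed

lemma Eset_mem:
  assumes "k \<in> {1..card (UNIV :: 't set)}" "card (Abar I k \<times> Tbar J k) \<noteq> 1"
  shows "ereal (w (I k) (J k)) = Bmin (Abar I k) (Tbar J k) (Abar I k \<times> Tbar J k) w"
proof -
  have "(I k, J k) \<in> medges (Abar I k) (Tbar J k) w" using seq assms(1)
    unfolding bottleneck_seq_def by blast
  then show ?thesis using assms(2) unfolding medges_def Eset_def by auto
qed

lemma bval_ge: "e \<in> E \<Longrightarrow> ereal (real (P (fst e) (snd e)) * w (fst e) (snd e)) \<le> bval P E w"
  unfolding bval_def by (rule SUP_upper)

lemma P0_bval: "k \<in> {1..card (UNIV :: 't set)} \<Longrightarrow> bval P0 (Abar I k \<times> Tbar J k) w = Bmin (Abar I k) (Tbar J k) (Abar I k \<times> Tbar J k) w"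
  using P0_bset unfolding Bset_def by blast

lemma P0_uses: "k \<in> {1..card (UNIV :: 't set)} \<Longrightarrow> P0 (I k) (J k) = 1"
proof (induction k rule: less_induct)
  case (less k)
  have used: "\<forall>j\<in>{1..<k}. P0 (I j) (J j) = 1" using less by auto
  show ?case
  proof (rule ccontr)
    assume "P0 (I k) (J k) \<noteq> 1"
    then have nu: "P0 (I k) (J k) = 0" using feas_full(1)[OF P0_feas] unfolding is_assignment_def by blast
    obtain f where f: "f \<in> Abar I k \<times> Tbar J k - {(I k, J k)}" "P0 (fst f) (snd f) = 1"
      "w (I k) (J k) < w (fst f) (snd f)"
      using F3[OF P0_feas less(2) used nu] by blast
    have eE: "(I k, J k) \<in> Abar I k \<times> Tbar J k" using IJ_mem[OF less(2)] by auto
    have c: "card (Abar I k \<times> Tbar J k) \<noteq> 1"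
    proof
      assume "card (Abar I k \<times> Tbar J k) = 1"
      then have "Abar I k \<times> Tbar J k = {(I k, J k)}" using eE by (metis card_1_singletonE singletonD)
      then show False using f(1) by simp
    qed
    have "ereal (w (fst f) (snd f)) \<le> bval P0 (Abar I k \<times> Tbar J k) w"
      using bval_ge[of f "Abar I k \<times> Tbar J k" P0] f by simp
    also have "\<dots> = ereal (w (I k) (J k))" using P0_bval[OF less(2)] Eset_mem[OF less(2) c] by simp
    finally show False using f(3) by simp
  qed
qed

lemma mono_step:
  assumes k: "k \<in> {1..<card (UNIV :: 't set)}"
  shows "w (I (Suc k)) (J (Suc k)) \<le> w (I k) (J k)"
proof -
  have k1: "k \<in> {1..card (UNIV :: 't set)}" and k2: "Suc k \<in> {1..card (UNIV :: 't set)}" using k by auto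
  have sub: "Abar I (Suc k) \<times> Tbar J (Suc k) \<subseteq> Abar I k \<times> Tbar J k"
    unfolding Abar_def Tbar_def by auto
  have m1: "(I k, J k) \<in> Abar I k \<times> Tbar J k" using IJ_mem[OF k1] by auto
  have m2: "(I (Suc k), J (Suc k)) \<in> Abar I k \<times> Tbar J k" using IJ_mem[OF k2] sub by auto
  have ne: "J k \<noteq> J (Suc k)" using J_ne(1)[of k "Suc k"] k by auto
  have c: "card (Abar I k \<times> Tbar J k) \<noteq> 1"
  proof
    assume "card (Abar I k \<times> Tbar J k) = 1"
    then obtain x where "Abar I k \<times> Tbar J k = {x}" by (rule card_1_singletonE)
    then show False using m1 m2 IJ_mem[OF k1] ne by auto
  qed
  have "ereal (w (I (Suc k)) (J (Suc k))) \<le> bval P0 (Abar I k \<times> Tbar J k) w"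
    using bval_ge[OF m2, of P0] P0_uses[OF k2] by simp
  also have "\<dots> = ereal (w (I k) (J k))" using P0_bval[OF k1] Eset_mem[OF k1 c] by simp
  finally show ?thesis by simp
qed

lemma mono_aux: "1 \<le> i \<Longrightarrow> i + d \<le> card (UNIV :: 't set) \<Longrightarrow> w (I (i + d)) (J (i + d)) \<le> w (I i) (J i)"
proof (induction d)
  case (Suc d)
  have "w (I (Suc (i + d))) (J (Suc (i + d))) \<le> w (I (i + d)) (J (i + d))"
    by (rule mono_step) (use Suc.prems in auto)
  then show ?case using Suc by simp
qed simp

lemma mono: "1 \<le> i \<Longrightarrow> i \<le> j \<Longrightarrow> j \<le> card (UNIV :: 't set) \<Longrightarrow> w (I j) (J j) \<le> w (I i) (J i)"
  using mono_aux[of i "j - i"] by simp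

lemma uniq:
  assumes P: "P \<in> feas UNIV UNIV UNIV" and u: "\<forall>k\<in>{1..card (UNIV :: 't set)}. P (I k) (J k) = 1"
  shows "P = P0"
proof (rule ext, rule ext)
  fix i j
  obtain k where k: "k \<in> {1..card (UNIV :: 't set)}" "J k = j" using J_surj by blast
  show "P i j = P0 i j"
  proof (cases "i = I k")
    case True
    then show ?thesis using u P0_uses k by auto
  next
    case False
    have "P i j \<noteq> 1" using col_unique[OF P, of i j "I k"] u k False by auto
    then have a: "P i j = 0" using feas_full(1)[OF P] unfolding is_assignment_def by blast
    have "P0 i j \<noteq> 1" using col_unique[OF P0_feas, of i j "I k"] P0_uses k False by auto
    then have "P0 i j = 0" using feas_full(1)[OF P0_feas] unfolding is_assignment_def by blast
    then show ?thesis using a by simp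
  qed
qed

lemma lex:
  assumes P: "P \<in> feas UNIV UNIV UNIV" and ne: "P \<noteq> P0"
  shows "\<exists>l\<in>{1..card (UNIV :: 't set)}. (\<forall>j\<in>{1..<l}. w (I j) (J j) = sorted_weights w P ! (j - 1))
            \<and> w (I l) (J l) < sorted_weights w P ! (l - 1)"
proof -
  let ?n = "card (UNIV :: 't set)"
  have "\<exists>k. k \<in> {1..?n} \<and> P (I k) (J k) \<noteq> 1" using uniq[OF P] ne by blast
  define k where "k = (LEAST k. k \<in> {1..?n} \<and> P (I k) (J k) \<noteq> 1)"
  have k: "k \<in> {1..?n} \<and> P (I k) (J k) \<noteq> 1"
    unfolding k_def by (rule LeastI_ex) fact
  have used: "\<forall>j\<in>{1..<k}. P (I j) (J j) = 1"
  proof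
    fix j assume j: "j \<in> {1..<k}"
    then have "\<not> (j \<in> {1..?n} \<and> P (I j) (J j) \<noteq> 1)"
      using not_less_Least[of j "\<lambda>k. k \<in> {1..?n} \<and> P (I k) (J k) \<noteq> 1"] unfolding k_def[symmetric] by auto
    then show "P (I j) (J j) = 1" using j k by auto
  qed
  have nu: "P (I k) (J k) = 0" using k feas_full(1)[OF P] unfolding is_assignment_def by blast
  obtain f where f: "f \<in> Abar I k \<times> Tbar J k - {(I k, J k)}" "P (fst f) (snd f) = 1"
      "w (I k) (J k) < w (fst f) (snd f)"
    using F3[OF P _ used nu] k by blast
  define ws where "ws = sorted_weights w P"
  define wf where "wf = (\<lambda>e. w (fst e) (snd e))"
  define U where "U = {e. P (fst e) (snd e) = 1}"
  have srt: "sorted (rev ws)" by (simp add: ws_def sorted_weights_def)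
  have mws: "mset ws = image_mset wf (mset_set U)" by (simp add: ws_def sorted_weights_def wf_def U_def)
  define g where "g = (\<lambda>j. (I j, J j))"
  have injI: "inj_on I {1..<k}" by (rule inj_on_subset[OF I_inj]) (use k in auto)
  then have injg: "inj_on g {1..<k}" unfolding g_def inj_on_def by auto
  have m1: "mset (map (\<lambda>j. w (I j) (J j)) [1..<k]) = image_mset wf (mset_set (g ` {1..<k}))"
    using image_mset_mset_set[OF injg, symmetric]
    by (simp add: mset_map mset_upt multiset.map_comp o_def wf_def g_def)
  have fn: "f \<notin> g ` {1..<k}" using f(1) unfolding g_def Abar_def by auto
  have "mset (map (\<lambda>j. w (I j) (J j)) [1..<k] @ [w (fst f) (snd f)]) = image_mset wf (mset_set (insert f (g ` {1..<k})))"
    using m1 fn by (simp add: wf_def)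
  also have "\<dots> \<subseteq># image_mset wf (mset_set U)"
  proof (rule image_mset_subseteq_mono, rule subset_imp_msubset_mset_set)
    show "insert f (g ` {1..<k}) \<subseteq> U" using f(2) used unfolding U_def g_def by auto
  qed simp
  finally have sub: "mset (map (\<lambda>j. w (I j) (J j)) [1..<k] @ [w (fst f) (snd f)]) \<subseteq># mset ws"
    using mws by simp
  obtain l where l: "l \<in> {1..k}" "\<forall>j\<in>{1..<l}. w (I j) (J j) = ws ! (j - 1)" "w (I l) (J l) < ws ! (l - 1)"
    using lexL[OF srt _ _ sub f(3)] k mono by force
  then show ?thesis unfolding ws_def using k by (intro bexI[of _ l]) auto
qed

lemma sw: "sorted_weights w P0 = map (\<lambda>j. w (I j) (J j)) [1..<Suc (card (UNIV :: 't set))]"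
proof -
  let ?n = "card (UNIV :: 't set)"
  define g where "g = (\<lambda>j. (I j, J j))"
  define wf where "wf = (\<lambda>e. w (fst e) (snd e))"
  define xs where "xs = map (\<lambda>j. w (I j) (J j)) [1..<Suc ?n]"
  have U: "{e. P0 (fst e) (snd e) = 1} = g ` {1..?n}"
  proof
    show "g ` {1..?n} \<subseteq> {e. P0 (fst e) (snd e) = 1}" using P0_uses unfolding g_def by auto
    show "{e. P0 (fst e) (snd e) = 1} \<subseteq> g ` {1..?n}"
    proof
      fix e assume e: "e \<in> {e. P0 (fst e) (snd e) = 1}"
      obtain k where k: "k \<in> {1..?n}" "J k = snd e" using J_surj by blast
      have "fst e = I k" using col_unique[OF P0_feas, of "fst e" "snd e" "I k"] e P0_uses[OF k(1)] k(2) by auto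
      then have "e = g k" using k(2) unfolding g_def by (simp add: prod_eq_iff)
      then show "e \<in> g ` {1..?n}" using k(1) by blast
    qed
  qed
  have injg: "inj_on g {1..?n}"
  proof (rule inj_onI)
    fix x y assume "x \<in> {1..?n}" "y \<in> {1..?n}" "g x = g y"
    then show "x = y" using inj_onD[OF I_inj, of x y] unfolding g_def by simp
  qed
  have mu: "mset [1..<Suc ?n] = mset_set {1..?n}" by (simp only: mset_upt atLeastLessThanSuc_atLeastAtMost)
  have M: "image_mset wf (mset_set {e. P0 (fst e) (snd e) = 1}) = mset xs"
    unfolding U using image_mset_mset_set[OF injg, symmetric]
    by (simp add: xs_def mset_map mu multiset.map_comp o_def wf_def g_def atLeastLessThanSuc_atLeastAtMost del: upt_Suc)
  have srt: "sorted (rev xs)"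
    unfolding sorted_rev_iff_nth_mono xs_def by (auto intro!: mono simp: nth_upt simp del: upt_Suc)
  have so: "sort xs = rev xs" by (rule properties_for_sort) (use srt in auto)
  have "sorted_weights w P0 = rev (sorted_list_of_multiset (mset xs))"
    unfolding sorted_weights_def using M unfolding wf_def by simp
  also have "\<dots> = xs" by (simp only: sorted_list_of_multiset_mset so rev_rev_ident)
  finally show ?thesis unfolding xs_def .
qed

end

theorem mainTheorem4:
  fixes w :: "'a::finite \<Rightarrow> 't::finite \<Rightarrow> real"
    and I :: "nat \<Rightarrow> 'a" and J :: "nat \<Rightarrow> 't"
    and Pistar :: "'a \<Rightarrow> 't \<Rightarrow> nat"
  assumes m_gt1: "card (UNIV :: 'a set) > 1"
    and n_le_m: "card (UNIV :: 't set) \<le> card (UNIV :: 'a set)"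
    and w_nonneg: "\<And>i j. w i j \<ge> 0"
    and seq: "bottleneck_seq w I J"
    and opt: "seq_opt w I J Pistar"
    and mu_pos: "\<forall>k\<in>{1..card (UNIV :: 't set)}. mu w I J k > 0"
  shows "Pistar \<in> feas UNIV UNIV UNIV
    \<and> (\<forall>k\<in>{1..<card (UNIV :: 't set)}. w (I k) (J k) \<ge> w (I (Suc k)) (J (Suc k)))
    \<and> (\<forall>Pi'\<in>feas UNIV UNIV UNIV. Pi' \<noteq> Pistar \<longrightarrow>
         (let ws = sorted_weights w Pi' in
            w (I 1) (J 1) < ws ! 0
          \<or> (\<exists>l\<in>{2..card (UNIV :: 't set)}. (\<forall>k\<in>{1..<l}. w (I k) (J k) = ws ! (k - 1))
                                 \<and> w (I l) (J l) < ws ! (l - 1))))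
    \<and> (\<forall>I' J' Pi''. bottleneck_seq w I' J' \<and> seq_opt w I' J' Pi''
          \<and> (\<forall>k\<in>{1..card (UNIV :: 't set)}. mu w I' J' k > 0) \<longrightarrow>
          Pi'' = Pistar \<and> (\<forall>k\<in>{1..card (UNIV :: 't set)}. w (I' k) (J' k) = w (I k) (J k)))"
proof -
  interpret S: seqs w I J Pistar using w_nonneg seq opt mu_pos by unfold_locales
  have nthS: "sorted_weights w Pistar ! (j - 1) = w (I j) (J j)" if "j \<in> {1..card (UNIV :: 't set)}" for j
  proof -
    have j: "j - 1 < length [1..<Suc (card (UNIV :: 't set))]" using that by auto
    have "[1..<Suc (card (UNIV :: 't set))] ! (j - 1) = j" using that by (auto simp: nth_upt simp del: upt_Suc)
    then show ?thesis using nth_map[OF j, of "\<lambda>j. w (I j) (J j)"] by (simp add: S.sw del: upt_Suc)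
  qed
  have c1: "Pistar \<in> feas UNIV UNIV UNIV" by (rule S.P0_feas)
  have c2: "\<forall>k\<in>{1..<card (UNIV :: 't set)}. w (I k) (J k) \<ge> w (I (Suc k)) (J (Suc k))"
    using S.mono_step by blast
  have c3: "\<forall>Pi'\<in>feas UNIV UNIV UNIV. Pi' \<noteq> Pistar \<longrightarrow>
         (let ws = sorted_weights w Pi' in
            w (I 1) (J 1) < ws ! 0
          \<or> (\<exists>l\<in>{2..card (UNIV :: 't set)}. (\<forall>k\<in>{1..<l}. w (I k) (J k) = ws ! (k - 1))
                                 \<and> w (I l) (J l) < ws ! (l - 1)))"
  proof (intro ballI impI)
    fix Pi' assume P: "Pi' \<in> feas UNIV UNIV UNIV" and ne: "Pi' \<noteq> Pistar"
    obtain l where l: "l \<in> {1..card (UNIV :: 't set)}"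
      "\<forall>j\<in>{1..<l}. w (I j) (J j) = sorted_weights w Pi' ! (j - 1)"
      "w (I l) (J l) < sorted_weights w Pi' ! (l - 1)"
      using S.lex[OF P ne] by blast
    show "let ws = sorted_weights w Pi' in
            w (I 1) (J 1) < ws ! 0
          \<or> (\<exists>l\<in>{2..card (UNIV :: 't set)}. (\<forall>k\<in>{1..<l}. w (I k) (J k) = ws ! (k - 1))
                                 \<and> w (I l) (J l) < ws ! (l - 1))"
    proof (cases "l = 1")
      case True
      then show ?thesis using l(3) by (simp add: Let_def)
    next
      case False
      then have "l \<in> {2..card (UNIV :: 't set)}" using l(1) by auto
      then show ?thesis using l(2,3) unfolding Let_def by blast
    qed
  qed
  have c4: "\<forall>I' J' Pi''. bottleneck_seq w I' J' \<and> seq_opt w I' J' Pi''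
          \<and> (\<forall>k\<in>{1..card (UNIV :: 't set)}. mu w I' J' k > 0) \<longrightarrow>
          Pi'' = Pistar \<and> (\<forall>k\<in>{1..card (UNIV :: 't set)}. w (I' k) (J' k) = w (I k) (J k))"
  proof (intro allI impI)
    fix I' J' Pi''
    assume h: "bottleneck_seq w I' J' \<and> seq_opt w I' J' Pi''
          \<and> (\<forall>k\<in>{1..card (UNIV :: 't set)}. mu w I' J' k > 0)"
    interpret T: seqs w I' J' Pi'' using w_nonneg h by unfold_locales auto
    have nthT: "sorted_weights w Pi'' ! (j - 1) = w (I' j) (J' j)" if "j \<in> {1..card (UNIV :: 't set)}" for j
    proof -
    have j: "j - 1 < length [1..<Suc (card (UNIV :: 't set))]" using that by auto
    have "[1..<Suc (card (UNIV :: 't set))] ! (j - 1) = j" using that by (auto simp: nth_upt simp del: upt_Suc)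
    then show ?thesis using nth_map[OF j, of "\<lambda>j. w (I' j) (J' j)"] by (simp add: T.sw del: upt_Suc)
  qed
    have eq: "Pi'' = Pistar"
    proof (rule ccontr)
      assume ne: "Pi'' \<noteq> Pistar"
      obtain l where l: "l \<in> {1..card (UNIV :: 't set)}"
        "\<forall>j\<in>{1..<l}. w (I j) (J j) = sorted_weights w Pi'' ! (j - 1)"
        "w (I l) (J l) < sorted_weights w Pi'' ! (l - 1)"
        using S.lex[OF T.P0_feas ne] by blast
      obtain l' where l': "l' \<in> {1..card (UNIV :: 't set)}"
        "\<forall>j\<in>{1..<l'}. w (I' j) (J' j) = sorted_weights w Pistar ! (j - 1)"
        "w (I' l') (J' l') < sorted_weights w Pistar ! (l' - 1)"
        using T.lex[OF S.P0_feas] ne by metis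
      have A: "\<forall>j\<in>{1..<l}. w (I j) (J j) = w (I' j) (J' j)" "w (I l) (J l) < w (I' l) (J' l)"
        using l nthT by auto
      have B: "\<forall>j\<in>{1..<l'}. w (I' j) (J' j) = w (I j) (J j)" "w (I' l') (J' l') < w (I l') (J l')"
        using l' nthS by auto
      show False
      proof (cases l l' rule: linorder_cases)
        case less
        then show ?thesis using A(2) B(1) l(1) by force
      next
        case equal
        then show ?thesis using A(2) B(2) by simp
      next
        case greater
        then show ?thesis using A(1) B(2) l'(1) by force
      qed
    qed
    moreover have "\<forall>k\<in>{1..card (UNIV :: 't set)}. w (I' k) (J' k) = w (I k) (J k)"
      using nthS nthT eq by metis
    ultimately show "Pi'' = Pistar \<and> (\<forall>k\<in>{1..card (UNIV :: 't set)}. w (I' k) (J' k) = w (I k) (J k))"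
      by blast
  qed
  show ?thesis using c1 c2 c3 c4 by blast
qed

end
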